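(* Let $h,w\ge 4$ and $G=C_w(U)\sqcap C_h$ where $U=\{i,i+1,i+2\}$ is a set of three consecutive vertices of $C_w$ (indices taken modulo $w$ in $\{1,\dots,w\}$). Then $Z(G)\le h+2$.
   Context: All graphs are finite, simple and undirected. Zero forcing: given a graph $G$ and a set $S\subseteq V(G)$ of initially filled vertices, the color change rule says that if a filled vertex $v$ has exactly one unfilled neighbor $u$, then $v$ forces $u$ to become filled. $S$ is a zero forcing set if repeatedly applying this rule eventually fills every vertex of $G$. The zero forcing number $Z(G)$ is the minimum cardinality of a zero forcing set of $G$. The cycle $C_n$ ($n\ge3$) has vertex set $\{1,\dots,n\}$ and edges $\{k,k+1\}$ for $1\le k\le n-1$ together with $\{n,1\}$. Generalized hierarchical product: for graphs $W,H$ and $U\subseteq V(W)$ (the root set), $W(U)\sqcap H$ is the graph with vertex set $V(W)\times V(H)$ in which $(x_1,y_1)$ and $(x_2,y_2)$ are adjacent iff either ($x_1=x_2\in U$ and $y_1y_2\in E(H)$) or ($y_1=y_2$ and $x_1x_2\in E(W)$). *)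

theory Defs
  imports Main
begin

definition cycle_adj :: "nat \<Rightarrow> nat \<Rightarrow> nat \<Rightarrow> bool" where
  "cycle_adj n x y \<longleftrightarrow> x \<in> {1..n} \<and> y \<in> {1..n} \<and>
     (y = x + 1 \<or> x = y + 1 \<or> (x = n \<and> y = 1) \<or> (x = 1 \<and> y = n))"

definition cycle_verts :: "nat \<Rightarrow> nat set" where
  "cycle_verts n = {1..n}"

definition hprod_verts :: "'a set \<Rightarrow> 'b set \<Rightarrow> ('a \<times> 'b) set" where
  "hprod_verts VW VH = VW \<times> VH"

definition hprod_adj :: "('a \<Rightarrow> 'a \<Rightarrow> bool) \<Rightarrow> 'a set \<Rightarrow> ('b \<Rightarrow> 'b \<Rightarrow> bool)
    \<Rightarrow> ('a \<times> 'b) \<Rightarrow> ('a \<times> 'b) \<Rightarrow> bool" where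
  "hprod_adj adjW U adjH p q \<longleftrightarrow>
     (fst p = fst q \<and> fst p \<in> U \<and> adjH (snd p) (snd q)) \<or>
     (snd p = snd q \<and> adjW (fst p) (fst q))"

inductive filled :: "'a set \<Rightarrow> ('a \<Rightarrow> 'a \<Rightarrow> bool) \<Rightarrow> 'a set \<Rightarrow> 'a \<Rightarrow> bool"
  for V adj S where
  init: "v \<in> S \<Longrightarrow> filled V adj S v"
| force: "\<lbrakk> filled V adj S v; v \<in> V; u \<in> V; adj v u;
           \<And>x. \<lbrakk> x \<in> V; adj v x; x \<noteq> u \<rbrakk> \<Longrightarrow> filled V adj S x \<rbrakk>
          \<Longrightarrow> filled V adj S u"

definition zero_forcing_set :: "'a set \<Rightarrow> ('a \<Rightarrow> 'a \<Rightarrow> bool) \<Rightarrow> 'a set \<Rightarrow> bool" where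
  "zero_forcing_set V adj S \<longleftrightarrow> S \<subseteq> V \<and> (\<forall>v\<in>V. filled V adj S v)"

definition zero_forcing_number :: "'a set \<Rightarrow> ('a \<Rightarrow> 'a \<Rightarrow> bool) \<Rightarrow> nat" where
  "zero_forcing_number V adj = (LEAST k. \<exists>S. zero_forcing_set V adj S \<and> card S = k)"

end

theory Submission imports Defs begin

lemma mod_succ_eq: "x \<in> {1..(w::nat)} \<Longrightarrow> x mod w + 1 = (if x = w then 1 else x + 1)"
  by auto

lemma cadj_iff: assumes "(w::nat) \<ge> 3" "x \<in> {1..w}" "z \<in> {1..w}"
  shows "cycle_adj w x z \<longleftrightarrow> (z = x mod w + 1 \<or> x = z mod w + 1)"
  unfolding cycle_adj_def using assms mod_succ_eq[OF assms(2)] mod_succ_eq[OF assms(3)] by auto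

definition col :: "nat \<Rightarrow> nat \<Rightarrow> nat \<Rightarrow> nat" where
  "col w i j = (i - 1 + j) mod w + 1"

lemma col_range: "w > 0 \<Longrightarrow> col w i j \<in> {1..w}"
  unfolding col_def by (simp add: Suc_leI)

lemma col_succ: "w > 0 \<Longrightarrow> Suc (col w i j mod w) = col w i (Suc j mod w)"
  unfolding col_def by (simp add: mod_Suc_eq mod_add_right_eq)

lemma col_inv: assumes "i \<in> {1..w}" "j < w" shows "(col w i j + w - i) mod w = j"
proof -
  have "col w i j + w - i = (i - 1 + j) mod w + (w + 1 - i)" using assms unfolding col_def by auto
  hence "(col w i j + w - i) mod w = (i - 1 + j + (w + 1 - i)) mod w" by (simp add: mod_add_left_eq)
  also have "i - 1 + j + (w + 1 - i) = j + w" using assms by auto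
  finally show ?thesis using assms by simp
qed

lemma col_inj: "i \<in> {1..w} \<Longrightarrow> j < w \<Longrightarrow> k < w \<Longrightarrow> col w i j = col w i k \<longleftrightarrow> j = k"
  by (metis col_inv)

lemma col_surj: assumes "i \<in> {1..w}" "x \<in> {1..w}" shows "\<exists>j<w. x = col w i j"
proof (intro exI conjI)
  show "(x + w - i) mod w < w" using assms by auto
  have "i - 1 + (x + w - i) mod w = (i - 1) + (x + w - i) mod w" by simp
  have "col w i ((x + w - i) mod w) = (i - 1 + (x + w - i)) mod w + 1"
    unfolding col_def by (simp add: mod_add_right_eq)
  also have "i - 1 + (x + w - i) = (x - 1) + w" using assms by auto
  finally show "x = col w i ((x + w - i) mod w)" using assms by auto
qed

lemma col_adj: assumes "w \<ge> 3" "i \<in> {1..w}" "j < w" "k < w"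
  shows "cycle_adj w (col w i j) (col w i k) \<longleftrightarrow> k = Suc j mod w \<or> j = Suc k mod w"
  proof -
  have "w > 0" using assms by auto
  have "cycle_adj w (col w i j) (col w i k) \<longleftrightarrow> (col w i k = Suc (col w i j mod w) \<or> col w i j = Suc (col w i k mod w))"
    using cadj_iff[OF assms(1) col_range col_range] \<open>w>0\<close> by simp
  also have "\<dots> \<longleftrightarrow> (col w i k = col w i (Suc j mod w) \<or> col w i j = col w i (Suc k mod w))"
    using col_succ[OF \<open>w>0\<close>] by simp
  also have "\<dots> \<longleftrightarrow> k = Suc j mod w \<or> j = Suc k mod w"
    using col_inj[OF assms(2)] assms \<open>w>0\<close> by auto
  finally show ?thesis .
qed

context
  fixes w h i :: nat
  assumes h4: "h \<ge> 4" and w4: "w \<ge> 4" and iw: "i \<in> {1..w}"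
begin

abbreviation "c j \<equiv> col w i j"
abbreviation "UU \<equiv> {c 0, c 1, c 2}"
abbreviation "VV \<equiv> hprod_verts (cycle_verts w) (cycle_verts h)"
abbreviation "AA \<equiv> hprod_adj (cycle_adj w) UU (cycle_adj h)"
abbreviation "SS \<equiv> {c 0} \<times> {1..h} \<union> {(c 1, 1), (c 1, 2)}"
abbreviation "FF \<equiv> filled VV AA SS"

lemma inV: "j < w \<Longrightarrow> y \<in> {1..h} \<Longrightarrow> (c j, y) \<in> VV"
  using w4 col_range[of w i j] by (simp add: hprod_verts_def cycle_verts_def)

lemma nbr:
  assumes "j < w" "y \<in> {1..h}" "p \<in> VV" "AA (c j, y) p"
  shows "(fst p = c j \<and> j \<le> 2 \<and> cycle_adj h y (snd p)) \<or>
         (snd p = y \<and> (\<exists>k<w. fst p = c k \<and> (k = Suc j mod w \<or> j = Suc k mod w)))"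
proof -
  obtain x' y' where p: "p = (x', y')" by force
  have x': "x' \<in> {1..w}" using assms(3) p by (simp add: hprod_verts_def cycle_verts_def)
  then obtain k where k: "k < w" "x' = c k" using col_surj[OF iw] by blast
  have U: "c j \<in> UU \<Longrightarrow> j \<le> 2" using col_inj[OF iw] assms(1) w4 by auto
  show ?thesis using assms(4) p k U col_adj[OF _ iw assms(1) k(1)] w4
    unfolding hprod_adj_def by auto
qed

lemma row_fill:
  assumes y: "y \<in> {1..h}" and f1: "FF (c 1, y)"
  shows "\<forall>j<w. FF (c j, y)"
proof -
  have f0: "FF (c 0, y)" using y by (intro filled.init) auto
  have Q: "m + 1 \<le> w - 2 \<Longrightarrow> FF (c ((w - m) mod w), y) \<and> FF (c ((w - (m+1)) mod w), y)" for m
  proof (induction m)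
    case 0
    have "FF (c (w - 1), y)"
    proof (rule filled.force[OF f0 inV[OF _ y] inV[OF _ y]])
      show "0 < w" "w - 1 < w" using w4 by auto
      show "AA (c 0, y) (c (w - 1), y)" unfolding hprod_adj_def using col_adj[OF _ iw, of 0 "w-1"] w4 by auto
      fix x assume x: "x \<in> VV" "AA (c 0, y) x" "x \<noteq> (c (w - 1), y)"
      obtain a b where ab: "x = (a, b)" by (cases x)
      have xV: "b \<in> {1..h}" using x(1) unfolding ab by (simp add: hprod_verts_def cycle_verts_def)
      from nbr[OF _ y x(1) x(2)] w4 consider "a = c 0"
        | k where "b = y" "k < w" "a = c k" "k = Suc 0 mod w \<or> 0 = Suc k mod w"
        unfolding ab fst_conv snd_conv by auto
      then show "FF x"
      proof cases
        case 1
        have "x \<in> SS" using 1 xV unfolding ab by blast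
        then show ?thesis by (rule filled.init)
      next
        case (2 k)
        have "k = 1 \<or> k = w - 1" using 2 w4 by (auto simp: mod_Suc split: if_splits)
        moreover have "k \<noteq> w - 1" using x(3) 2 unfolding ab by blast
        ultimately have "x = (c 1, y)" using 2 unfolding ab by blast
        then show ?thesis using f1 by (simp only:)
      qed
    qed
    moreover have "(w - 0) mod w = 0" "(w - (0 + 1)) mod w = w - 1" using w4 by auto
    ultimately show ?case using f0 by (simp only:)
  next
    case (Suc m)
    then have IH: "FF (c ((w - m) mod w), y)" "FF (c ((w - (m+1)) mod w), y)" by auto
    have e1: "(w - (m+1)) mod w = w - m - 1" using Suc.prems by simp
    have e2: "(w - (Suc m + 1)) mod w = w - m - 2" using Suc.prems by simp
    have v: "w - m - 1 < w" using w4 by auto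
    have "FF (c (w - m - 2), y)"
    proof (rule filled.force[OF IH(2)[unfolded e1] inV[OF v y] inV[OF _ y]])
      show "w - m - 2 < w" using w4 by auto
      show "AA (c (w - m - 1), y) (c (w - m - 2), y)" unfolding hprod_adj_def
        using col_adj[OF _ iw, of "w - m - 1" "w - m - 2"] w4 Suc.prems by auto
      fix x assume x: "x \<in> VV" "AA (c (w - m - 1), y) x" "x \<noteq> (c (w - m - 2), y)"
      obtain a b where ab: "x = (a, b)" by (cases x)
      have "\<not> w - m - 1 \<le> 2" using Suc.prems by linarith
      with nbr[OF v y x(1) x(2)] obtain k where
        k: "b = y" "k < w" "a = c k" "k = Suc (w - m - 1) mod w \<or> w - m - 1 = Suc k mod w"
        unfolding ab fst_conv snd_conv by blast
      have "k = (w - m) mod w \<or> k = w - m - 2"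
      proof (cases "m = 0")
        case True then show ?thesis using k w4 Suc.prems
          by (auto simp: mod_Suc split: if_splits)
      next
        case False then show ?thesis using k w4 Suc.prems
          by (auto simp: mod_Suc split: if_splits)
      qed
      moreover have "k \<noteq> w - m - 2" using x(3) k unfolding ab by blast
      ultimately have "x = (c ((w - m) mod w), y)" using k unfolding ab by blast
      then show "FF x" using IH(1) by (simp only:)
    qed
    moreover have e3: "(w - Suc m) mod w = w - m - 1" using e1 by simp
    ultimately show ?case using IH(2) unfolding e1 e2 e3 by blast
  qed
  show ?thesis
  proof (intro allI impI)
    fix j assume j: "j < w"
    show "FF (c j, y)"
    proof (cases "j \<le> 1")
      case True
      then consider "j = 0" | "j = 1" by linarith
      then show ?thesis
      proof cases
        case 1 then show ?thesis using f0 by (simp only:)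
      next
        case 2 then show ?thesis using f1 by (simp only:)
      qed
    next
      case False
      have e0: "w - j - 1 + 1 = w - j" using j by simp
      have h1: "w - j - 1 + 1 \<le> w - 2" unfolding e0 using False j by linarith
      have e: "(w - (w - j - 1 + 1)) mod w = j" unfolding e0 using j by simp
      from conjunct2[OF Q[OF h1]] show ?thesis unfolding e .
    qed
  qed
qed

lemma col1_fill: "n + 2 \<le> h \<Longrightarrow> FF (c 1, n+1) \<and> FF (c 1, n+2)"
proof (induction n)
  case 0
  have "(c 1, 0+1) \<in> SS" "(c 1, 0+2) \<in> SS" by auto
  then show ?case by (blast intro: filled.init)
next
  case (Suc n)
  then have IH: "FF (c 1, n+1)" "FF (c 1, n+2)" by auto
  have y2: "n + 2 \<in> {1..h}" using Suc.prems by auto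
  have row2: "\<forall>j<w. FF (c j, n+2)" using row_fill[OF y2 IH(2)] .
  have one: "1 < w" using w4 by auto
  have "FF (c 1, n+3)"
  proof (rule filled.force[OF IH(2) inV[OF one y2] inV[OF one]])
    show "n + 3 \<in> {1..h}" using Suc.prems by auto
    show "AA (c 1, n+2) (c 1, n+3)" unfolding hprod_adj_def cycle_adj_def using Suc.prems by auto
    fix x assume x: "x \<in> VV" "AA (c 1, n+2) x" "x \<noteq> (c 1, n+3)"
    obtain a b where ab: "x = (a, b)" by (cases x)
    from nbr[OF one y2 x(1) x(2)] consider "a = c 1" "cycle_adj h (n+2) b"
      | k where "b = n+2" "k < w" "a = c k"
      unfolding ab fst_conv snd_conv by blast
    then show "FF x"
    proof cases
      case 1
      have "b = n + 3 \<or> b = n + 1" using 1(2) Suc.prems unfolding cycle_adj_def by auto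
      moreover have "b \<noteq> n + 3" using x(3) 1(1) unfolding ab by blast
      ultimately have "x = (c 1, n+1)" using 1(1) unfolding ab by blast
      then show ?thesis using IH(1) by (simp only:)
    next
      case (2 k)
      have "x = (c k, n+2)" using 2 unfolding ab by blast
      then show ?thesis using row2 2(2) by (simp only:)
    qed
  qed
  moreover have "Suc n + 1 = n + 2" "Suc n + 2 = n + 3" by auto
  ultimately show ?case using IH(2) by (simp only:)
qed

lemma all_filled: "v \<in> VV \<Longrightarrow> FF v"
proof -
  assume v: "v \<in> VV"
  obtain x y where xy: "v = (x, y)" by (cases v)
  have x: "x \<in> {1..w}" and y: "y \<in> {1..h}" using v unfolding xy by (auto simp: hprod_verts_def cycle_verts_def)
  obtain j where j: "j < w" "x = c j" using col_surj[OF iw x] by blast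
  have "FF (c 1, y)"
  proof (cases "y = 1")
    case True
    then show ?thesis using conjunct1[OF col1_fill[of 0]] h4 by simp
  next
    case False
    then have "y - 2 + 2 \<le> h" "y - 2 + 2 = y" using y by auto
    then show ?thesis using conjunct2[OF col1_fill[of "y - 2"]] by simp
  qed
  then have "\<forall>j<w. FF (c j, y)" using row_fill[OF y] by blast
  then show "FF v" using j unfolding xy by (simp only:)
qed

lemma zfs: "zero_forcing_set VV AA SS"
  unfolding zero_forcing_set_def
proof
  show "SS \<subseteq> VV" using col_range[of w i] w4 h4 by (auto simp: hprod_verts_def cycle_verts_def)
  show "\<forall>v\<in>VV. FF v" using all_filled by blast
qed

lemma cardS: "card SS = h + 2"
proof -
  have ne: "c 1 \<noteq> c 0" using col_inj[OF iw, of 1 0] w4 by auto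
  have "card ({c 0} \<times> {1..h}) = h" by (simp add: card_cartesian_product)
  moreover have "card {(c 1, 1::nat), (c 1, 2)} = 2" by simp
  moreover have "{c 0} \<times> {1..h} \<inter> {(c 1, 1), (c 1, 2)} = {}" using ne by auto
  ultimately show ?thesis by (simp add: card_Un_disjoint)
qed

end


theorem mainTheorem6:
  fixes h w i :: nat
  assumes "h \<ge> 4" and "w \<ge> 4" and "i \<in> {1..w}"
  defines "U \<equiv> {i, i mod w + 1, (i + 1) mod w + 1}"
  shows "zero_forcing_number (hprod_verts (cycle_verts w) (cycle_verts h))
           (hprod_adj (cycle_adj w) U (cycle_adj h)) \<le> h + 2"
proof -
  have c0: "col w i 0 = i" using assms(3) unfolding col_def by auto
  have c1: "col w i 1 = i mod w + 1" using assms(3) unfolding col_def by auto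
  have e: "i - 1 + 2 = i + 1" using assms(3) by auto
  have c2: "col w i 2 = (i + 1) mod w + 1" unfolding col_def e ..
  have U: "U = {col w i 0, col w i 1, col w i 2}" unfolding U_def c0 c1 c2 ..
  show ?thesis unfolding zero_forcing_number_def U
    by (rule Least_le) (use zfs[OF assms(1-3)] cardS[OF assms(1-3)] in blast)
qed

end
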